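(* Let $G$ be a finite connected unweighted graph with $E\ge1$ edges, enumerated as $e_1,\dots,e_E$, and let $M\in\mathbb{N}$. Define the graph $H=H(G,M)$ as follows. For each vertex $u$ of $G$ take a path ("short path") $p_u$ with vertices $(u,1),(u,2),\dots,(u,E)$, consecutive ones adjacent; these paths are disjoint. For each edge $e_i=uv$ of $G$ add a path of length $M$ (with $M-1$ new internal vertices) joining $(u,i)$ and $(v,i)$; these "long paths" are internally disjoint from each other and from the short paths. Then $H$ has maximum degree at most $3$. Fix $i_0\in\{1,\dots,E\}$ and define $\psi:V(G)\to V(H)$ by $\psi(u)=(u,i_0)$. Then, with shortest path metrics $d_G,d_H$, for all vertices $u,v$ of $G$: $$M\,d_G(u,v)\le d_H(\psi(u),\psi(v))\le (2E+M)\,d_G(u,v).$$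
   Context: Graphs carry the shortest path metric; the length of a path is its number of edges. *)

theory Defs
  imports Main
begin

inductive walk :: "('v \<Rightarrow> 'v \<Rightarrow> bool) \<Rightarrow> 'v \<Rightarrow> 'v \<Rightarrow> nat \<Rightarrow> bool"
  for adj :: "'v \<Rightarrow> 'v \<Rightarrow> bool" where
  walk_nil: "walk adj x x 0"
| walk_cons: "adj x y \<Longrightarrow> walk adj y z n \<Longrightarrow> walk adj x z (Suc n)"

definition gdist :: "('v \<Rightarrow> 'v \<Rightarrow> bool) \<Rightarrow> 'v \<Rightarrow> 'v \<Rightarrow> nat" where
  "gdist adj x y = (LEAST n. walk adj x y n)"

text \<open>The graph G: finite vertex set V, edges enumerated (0-based) by the list es;
  the adjacency of G is the symmetric closure of set es.\<close>

definition gadj :: "('a \<times> 'a) list \<Rightarrow> 'a \<Rightarrow> 'a \<Rightarrow> bool" where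
  "gadj es u v = ((u, v) \<in> set es \<or> (v, u) \<in> set es)"

definition simple_graph_enum :: "'a set \<Rightarrow> ('a \<times> 'a) list \<Rightarrow> bool" where
  "simple_graph_enum V es =
     (finite V \<and> (\<forall>(u, v) \<in> set es. u \<in> V \<and> v \<in> V \<and> u \<noteq> v)
      \<and> distinct (map (\<lambda>(u, v). {u, v}) es))"

definition connected_graph :: "'a set \<Rightarrow> ('a \<times> 'a) list \<Rightarrow> bool" where
  "connected_graph V es = (\<forall>u\<in>V. \<forall>v\<in>V. \<exists>n. walk (gadj es) u v n)"

text \<open>Vertices of H: Short u j is the vertex (u, j+1) of the short path p_u (0-based j);
  Long i k (0 < k < M) is the k-th internal vertex of the long path of edge es!i.\<close>

datatype 'a hvert = Short 'a nat | Long nat nat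

definition long_node :: "('a \<times> 'a) list \<Rightarrow> nat \<Rightarrow> nat \<Rightarrow> nat \<Rightarrow> 'a hvert" where
  "long_node es M i k =
     (if k = 0 then Short (fst (es ! i)) i
      else if k = M then Short (snd (es ! i)) i
      else Long i k)"

definition H_verts :: "'a set \<Rightarrow> ('a \<times> 'a) list \<Rightarrow> nat \<Rightarrow> 'a hvert set" where
  "H_verts V es M =
     {Short u j | u j. u \<in> V \<and> j < length es} \<union>
     {Long i k | i k. i < length es \<and> 0 < k \<and> k < M}"

definition H_adj0 :: "'a set \<Rightarrow> ('a \<times> 'a) list \<Rightarrow> nat \<Rightarrow> 'a hvert \<Rightarrow> 'a hvert \<Rightarrow> bool" where
  "H_adj0 V es M x y =
     ((\<exists>u\<in>V. \<exists>j. Suc j < length es \<and> x = Short u j \<and> y = Short u (Suc j))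
      \<or> (\<exists>i < length es. \<exists>k < M. x = long_node es M i k \<and> y = long_node es M i (Suc k)))"

definition H_adj :: "'a set \<Rightarrow> ('a \<times> 'a) list \<Rightarrow> nat \<Rightarrow> 'a hvert \<Rightarrow> 'a hvert \<Rightarrow> bool" where
  "H_adj V es M x y = (H_adj0 V es M x y \<or> H_adj0 V es M y x)"

end

theory Submission
  imports Defs
begin

lemma walk_append: "walk adj x y n \<Longrightarrow> walk adj y z m \<Longrightarrow> walk adj x z (n+m)"
  by (induction rule: walk.induct) (auto intro: walk.intros)

lemma walk_snoc: "walk adj x y n \<Longrightarrow> adj y z \<Longrightarrow> walk adj x z (Suc n)"
  using walk_append[of adj x y n z 1] by (auto intro: walk.intros)

lemma walk_rev: assumes "\<And>a b. adj a b \<Longrightarrow> adj b a"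
  shows "walk adj x y n \<Longrightarrow> walk adj y x n"
  by (induction rule: walk.induct) (auto intro: walk.intros walk_snoc assms)

lemma gdist_le: "walk adj x y n \<Longrightarrow> gdist adj x y \<le> n"
  unfolding gdist_def by (rule Least_le)

lemma gdist_walk: "walk adj x y n \<Longrightarrow> walk adj x y (gdist adj x y)"
  unfolding gdist_def by (rule LeastI)

lemma H_sym: "H_adj V es M a b \<Longrightarrow> H_adj V es M b a"
  unfolding H_adj_def by auto

lemma short_walk_up: "u \<in> V \<Longrightarrow> j + d < length es \<Longrightarrow>
   walk (H_adj V es M) (Short u j) (Short u (j+d)) d"
proof (induction d arbitrary: j)
  case 0 then show ?case by (simp add: walk_nil)
next
  case (Suc d)
  have "H_adj V es M (Short u j) (Short u (Suc j))"
    using Suc.prems unfolding H_adj_def H_adj0_def by auto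
  moreover have "walk (H_adj V es M) (Short u (Suc j)) (Short u (Suc j + d)) d"
    using Suc.IH[of "Suc j"] Suc.prems by simp
  ultimately show ?case by (simp add: walk_cons)
qed

lemma short_walk: assumes "u \<in> V" "j < length es" "j' < length es"
  shows "\<exists>n<length es. walk (H_adj V es M) (Short u j) (Short u j') n"
proof (cases "j \<le> j'")
  case True
  then have "walk (H_adj V es M) (Short u j) (Short u j') (j'-j)"
    using short_walk_up[of u V j "j'-j" es M] assms by auto
  then show ?thesis using assms True by (intro exI[of _ "j'-j"]) auto
next
  case False
  then have "walk (H_adj V es M) (Short u j') (Short u j) (j-j')"
    using short_walk_up[of u V j' "j-j'" es M] assms by auto
  then have "walk (H_adj V es M) (Short u j) (Short u j') (j-j')"
    using walk_rev[of "H_adj V es M"] H_sym by blast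
  then show ?thesis using assms False by (intro exI[of _ "j-j'"]) auto
qed

lemma long_walk: "i < length es \<Longrightarrow> k \<le> M \<Longrightarrow>
  walk (H_adj V es M) (long_node es M i 0) (long_node es M i k) k"
proof (induction k)
  case 0 then show ?case by (simp add: walk_nil)
next
  case (Suc k)
  have "H_adj0 V es M (long_node es M i k) (long_node es M i (Suc k))"
    unfolding H_adj0_def using Suc.prems
    by (intro disjI2) (blast dest: Suc_le_lessD)
  then have "H_adj V es M (long_node es M i k) (long_node es M i (Suc k))"
    unfolding H_adj_def by simp
  then show ?case using Suc walk_snoc by fastforce
qed

lemma gadj_V: "simple_graph_enum V es \<Longrightarrow> gadj es x y \<Longrightarrow> x \<in> V \<and> y \<in> V \<and> x \<noteq> y"
  unfolding simple_graph_enum_def gadj_def by auto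

lemma edge_step:
  assumes "i0 < length es" "M \<ge> 1" "simple_graph_enum V es" "gadj es x y"
  shows "\<exists>L \<le> 2*length es + M. walk (H_adj V es M) (Short x i0) (Short y i0) L"
proof -
  from assms(4) obtain i where i: "i < length es" "es!i = (x,y) \<or> es!i = (y,x)"
    unfolding gadj_def in_set_conv_nth by metis
  have xy: "x \<in> V" "y \<in> V" using gadj_V[OF assms(3,4)] by auto
  have lw: "walk (H_adj V es M) (Short (fst (es!i)) i) (Short (snd (es!i)) i) M"
    using long_walk[of i es M M V] i assms(2) by (simp add: long_node_def)
  have "walk (H_adj V es M) (Short x i) (Short y i) M"
    using i(2)
  proof
    assume "es!i = (x,y)" then show ?thesis using lw by simp
  next
    assume "es!i = (y,x)" then show ?thesis using walk_rev[of "H_adj V es M", OF H_sym lw] by simp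
  qed
  moreover obtain n1 where "n1 < length es" "walk (H_adj V es M) (Short x i0) (Short x i) n1"
    using short_walk[OF xy(1) assms(1) i(1)] by blast
  moreover obtain n2 where "n2 < length es" "walk (H_adj V es M) (Short y i) (Short y i0) n2"
    using short_walk[OF xy(2) i(1) assms(1)] by blast
  ultimately show ?thesis
    by (intro exI[of _ "n1 + M + n2"]) (auto intro: walk_append)
qed

lemma upper_walk:
  assumes "i0 < length es" "M \<ge> 1" "simple_graph_enum V es"
  shows "walk (gadj es) x z n \<Longrightarrow>
    \<exists>L \<le> (2*length es + M) * n. walk (H_adj V es M) (Short x i0) (Short z i0) L"
proof (induction rule: walk.induct)
  case (walk_nil x) then show ?case by (auto intro: walk.intros)
next
  case (walk_cons x y z n)
  obtain L1 where "L1 \<le> 2*length es + M" "walk (H_adj V es M) (Short x i0) (Short y i0) L1"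
    using edge_step[OF assms walk_cons(1)] by blast
  moreover obtain L2 where "L2 \<le> (2*length es + M) * n" "walk (H_adj V es M) (Short y i0) (Short z i0) L2"
    using walk_cons(3) by blast
  ultimately show ?case
    by (intro exI[of _ "L1 + L2"]) (auto intro: walk_append)
qed

definition hpot :: "('a \<times> 'a) list \<Rightarrow> nat \<Rightarrow> 'a \<Rightarrow> 'a hvert \<Rightarrow> nat" where
  "hpot es M u x = (case x of Short w j \<Rightarrow> M * gdist (gadj es) u w
     | Long i k \<Rightarrow> min (M * gdist (gadj es) u (fst (es!i)) + k)
                      (M * gdist (gadj es) u (snd (es!i)) + (M - k)))"

lemma dG_adj:
  assumes "simple_graph_enum V es" "connected_graph V es" "u \<in> V" "gadj es a b"
  shows "gdist (gadj es) u b \<le> gdist (gadj es) u a + 1"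
proof -
  have "a \<in> V" using gadj_V[OF assms(1,4)] by auto
  then obtain n where "walk (gadj es) u a n" using assms(2,3) unfolding connected_graph_def by blast
  then have "walk (gadj es) u a (gdist (gadj es) u a)" by (rule gdist_walk)
  then have "walk (gadj es) u b (Suc (gdist (gadj es) u a))" using assms(4) by (rule walk_snoc)
  then show ?thesis using gdist_le by fastforce
qed

lemma hpot_long:
  assumes "simple_graph_enum V es" "connected_graph V es" "u \<in> V" "M \<ge> 1"
    "i < length es" "k \<le> M"
  shows "hpot es M u (long_node es M i k) =
    min (M * gdist (gadj es) u (fst (es!i)) + k) (M * gdist (gadj es) u (snd (es!i)) + (M - k))"
proof -
  define da where "da = gdist (gadj es) u (fst (es!i))"
  define db where "db = gdist (gadj es) u (snd (es!i))"
  have e: "es!i \<in> set es" using assms(5) by simp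
  have "gadj es (fst (es!i)) (snd (es!i))" "gadj es (snd (es!i)) (fst (es!i))"
    using e unfolding gadj_def by auto
  then have d1: "db \<le> da + 1" "da \<le> db + 1"
    using dG_adj[OF assms(1-3)] unfolding da_def db_def by auto
  have m1: "M * db \<le> M * da + M" "M * da \<le> M * db + M"
    using mult_le_mono2[OF d1(1), of M] mult_le_mono2[OF d1(2), of M] by auto
  show ?thesis
    using m1[unfolded da_def db_def] assms(4,6)
    by (auto simp add: long_node_def hpot_def min_def)
qed

lemma hpot_step0:
  assumes "simple_graph_enum V es" "connected_graph V es" "u \<in> V" "M \<ge> 1"
    "H_adj0 V es M x y"
  shows "hpot es M u y \<le> hpot es M u x + 1 \<and> hpot es M u x \<le> hpot es M u y + 1"
  using assms(5) unfolding H_adj0_def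
proof (elim disjE exE conjE bexE)
  fix w j assume "x = Short w j" "y = Short w (Suc j)"
  then show ?thesis by (simp add: hpot_def)
next
  fix i k assume h: "i < length es" "k < M" "x = long_node es M i k" "y = long_node es M i (Suc k)"
  show ?thesis using h hpot_long[OF assms(1-4) h(1), of k] hpot_long[OF assms(1-4) h(1), of "Suc k"]
    by (auto simp add: min_def)
qed

lemma hpot_walk:
  assumes "simple_graph_enum V es" "connected_graph V es" "u \<in> V" "M \<ge> 1"
  shows "walk (H_adj V es M) x y n \<Longrightarrow> hpot es M u y \<le> hpot es M u x + n"
proof (induction rule: walk.induct)
  case (walk_nil x) then show ?case by simp
next
  case (walk_cons x y z n)
  have "hpot es M u y \<le> hpot es M u x + 1"
    using walk_cons(1) hpot_step0[OF assms] unfolding H_adj_def by blast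
  then show ?case using walk_cons(3) by simp
qed

lemma nbr_subset_short:
  assumes "simple_graph_enum V es" "j < length es"
  shows "{y. H_adj V es M (Short u j) y} \<subseteq>
     {Short u (Suc j), Short u (j - 1),
      if u = fst (es!j) then long_node es M j 1 else long_node es M j (M - 1)}"
proof
  have fs: "fst (es!j) \<noteq> snd (es!j)"
    using assms nth_mem[OF assms(2)] unfolding simple_graph_enum_def by fastforce
  fix y assume "y \<in> {y. H_adj V es M (Short u j) y}"
  then have "H_adj0 V es M (Short u j) y \<or> H_adj0 V es M y (Short u j)"
    unfolding H_adj_def by simp
  then show "y \<in> {Short u (Suc j), Short u (j - 1),
      if u = fst (es!j) then long_node es M j 1 else long_node es M j (M - 1)}"
    unfolding H_adj0_def using fs
    by (auto simp add: long_node_def split: if_splits)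
qed

lemma nbr_subset_long:
  shows "{y. H_adj V es M (Long i k) y} \<subseteq>
     {long_node es M i (Suc k), long_node es M i (k - 1)}"
proof
  fix y assume "y \<in> {y. H_adj V es M (Long i k) y}"
  then have "H_adj0 V es M (Long i k) y \<or> H_adj0 V es M y (Long i k)"
    unfolding H_adj_def by simp
  then show "y \<in> {long_node es M i (Suc k), long_node es M i (k - 1)}"
    unfolding H_adj0_def
    by (auto simp add: long_node_def split: if_splits)
qed

lemma card3: "card {a, b, c} \<le> 3"
  by (auto simp: card_insert_if)

theorem mainTheorem4:
  fixes V :: "'a set" and es :: "('a \<times> 'a) list" and M i0 :: nat
  assumes "simple_graph_enum V es" and "connected_graph V es"
    and "length es \<ge> 1" and "M \<ge> 1" and "i0 < length es"
  shows "(\<forall>x \<in> H_verts V es M. finite {y. H_adj V es M x y} \<and> card {y. H_adj V es M x y} \<le> 3)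
    \<and> (\<forall>u\<in>V. \<forall>v\<in>V.
         M * gdist (gadj es) u v \<le> gdist (H_adj V es M) (Short u i0) (Short v i0)
       \<and> gdist (H_adj V es M) (Short u i0) (Short v i0) \<le> (2 * length es + M) * gdist (gadj es) u v)"
proof (rule conjI; intro ballI)
  fix x assume x: "x \<in> H_verts V es M"
  show "finite {y. H_adj V es M x y} \<and> card {y. H_adj V es M x y} \<le> 3"
  proof (cases x)
    case (Short u j)
    then have j: "j < length es" using x unfolding H_verts_def by auto
    show ?thesis using nbr_subset_short[OF assms(1) j, of M u] Short
      by (meson card3 card_mono finite.intros rev_finite_subset order_trans)
  next
    case (Long i k)
    have "card {long_node es M i (Suc k), long_node es M i (k - 1)} \<le> 3"
      by (auto simp: card_insert_if)
    then show ?thesis using nbr_subset_long[of V es M i k] Long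
      by (meson card_mono finite.intros rev_finite_subset order_trans)
  qed
next
  fix u v assume u: "u \<in> V" and v: "v \<in> V"
  show "M * gdist (gadj es) u v \<le> gdist (H_adj V es M) (Short u i0) (Short v i0)
       \<and> gdist (H_adj V es M) (Short u i0) (Short v i0) \<le> (2 * length es + M) * gdist (gadj es) u v"
  proof

  obtain n where "walk (gadj es) u v n" using assms(2) u v unfolding connected_graph_def by blast
  then have gw: "walk (gadj es) u v (gdist (gadj es) u v)" by (rule gdist_walk)
  obtain L where L: "L \<le> (2*length es + M) * gdist (gadj es) u v"
      "walk (H_adj V es M) (Short u i0) (Short v i0) L"
    using upper_walk[OF assms(5,4,1) gw] by blast
  show "gdist (H_adj V es M) (Short u i0) (Short v i0) \<le> (2 * length es + M) * gdist (gadj es) u v"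
    using gdist_le[OF L(2)] L(1) by simp
  have hw: "walk (H_adj V es M) (Short u i0) (Short v i0) (gdist (H_adj V es M) (Short u i0) (Short v i0))"
    using L(2) by (rule gdist_walk)
  have "gdist (gadj es) u u = 0" using gdist_le[OF walk_nil, of "gadj es" u] by simp
  then show "M * gdist (gadj es) u v \<le> gdist (H_adj V es M) (Short u i0) (Short v i0)"
    using hpot_walk[OF assms(1,2) u assms(4) hw] by (simp add: hpot_def)
  qed
qed

end
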